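(* For all $\lambda,\mu>0$ and $f\in C(S_{\mathrm u})$, \[ (\lambda-\mu)\,u(R^{\mathrm{co}}_\lambda f,\mu)=u(f,\mu)-u(f,\lambda). \] Equivalently, for every $(i,j)\in\mathcal{IJ}$, \[ \int_{S_{\mathrm u}}(\lambda-\mu)R^{\mathrm{co}}_\mu R^{\mathrm{co}}_\lambda f\,\mathrm d\mathfrak p_{i,j}=\int_{S_{\mathrm u}}R^{\mathrm{co}}_\mu f\,\mathrm d\mathfrak p_{i,j}-\int_{S_{\mathrm u}}R^{\mathrm{co}}_\lambda f\,\mathrm d\mathfrak p_{i,j}. \]
   Context: Let $S_1,\dots,S_N$ be disjoint compact metrizable separable spaces and $A_i$ generators of Feller semigroups (positive contraction semigroups, not necessarily conservative) on $C(S_i)$ with resolvents $R_{\lambda,i}=(\lambda-A_i)^{-1}$. Assume $A_1,\dots,A_M$ ($1\le M\le N$) are not conservative and $A_{M+1},\dots,A_N$ are conservative. For $i\in\mathcal M=\{1,\dots,M\}$, assume the kernel of $A_i$ is trivial and there are continuous functions $\phi^{i,j}$, $j=1,\dots,\kappa(i)$, with $0\le\phi^{i,j}\le 1_{S_i}$, $\lambda R_{\lambda,i}\phi^{i,j}\le\phi^{i,j}$ for all $\lambda>0$, $\lambda R_{\lambda,i}\phi^{i,j}\neq\phi^{i,j}$, and $\sum_{j=1}^{\kappa(i)}\phi^{i,j}=1_{S_i}$. Let $\ell^{i,j}_\lambda=\phi^{i,j}-\lambda R_{\lambda,i}\phi^{i,j}$ (Laplace transforms of exit laws), and $\mathcal{IJ}=\{(i,j):i\in\mathcal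 M,\ 1\le j\le\kappa(i)\}$, $\kappa=\sum_{i\in\mathcal M}\kappa(i)$. Let $S_{\mathrm u}$ be the disjoint union of the $S_i$; functions on $S_i$ are extended by zero to $S_{\mathrm u}$, and $f_i=f1_{S_i}$. Define $R^{\mathrm{du}}_\lambda f=\sum_{i=1}^N R_{\lambda,i}f_i$. Let $\mathfrak p_{i,j}$, $(i,j)\in\mathcal{IJ}$, be Borel sub-probability measures on $S_{\mathrm u}$. Let $N_\lambda:\mathbb R^\kappa\to\mathbb R^\kappa$, $(N_\lambda w)_{i,j}=\sum_{k\in\mathcal M}\sum_{l=1}^{\kappa(k)}w_{k,l}\int_{S_k}\ell^{k,l}_\lambda\,\mathrm d\mathfrak p_{i,j}$; then $\|N_\lambda\|<1$ (max norm) and $M_\lambda=I-N_\lambda$ is invertible. For $f\in C(S_{\mathrm u})$ set $v(f,\lambda)=\big(\int_{S_{\mathrm u}}R^{\mathrm{du}}_\lambda f\,\mathrm d\mathfrak p_{i,j}\big)_{(i,j)\in\mathcal{IJ}}$, $u(f,\lambda)=M_\lambda^{-1}v(f,\lambda)$, and \[ R^{\mathrm{co}}_\lambda f=R^{\mathrm{du}}_\lambda f+\sum_{i\in\mathcal M}\sum_{j=1}^{\kappa(i)}u_{i,j}(f,\lambda)\,\ell^{i,j}_\lambda. \] It holds that $u_{i,j}(f,\lambda)=\int_{S_{\mathrm u}}R^{\mathrm{co}}_\lambda f\,\mathrm d\mathfrak p_{i,j}$. *)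

theory Defs
  imports "HOL-Probability.Probability"
begin

(* C(S) for a (clopen) piece S of the disjoint union, functions extended by zero *)
definition Cfun :: "'a::topological_space set \<Rightarrow> ('a \<Rightarrow> real) set" where
  "Cfun S = {f. continuous_on S f \<and> (\<forall>x. x \<notin> S \<longrightarrow> f x = 0)}"

definition restr :: "'a set \<Rightarrow> ('a \<Rightarrow> real) \<Rightarrow> 'a \<Rightarrow> real" where
  "restr S f = (\<lambda>x. if x \<in> S then f x else 0)"

(* R lam = (lam - A)^{-1}, lam > 0, is the resolvent of the generator of a Feller
   (positive, strongly continuous, contraction, not necessarily conservative)
   semigroup on C(S)  (Hille--Yosida characterisation) *)
definition feller_resolvent :: "'a::topological_space set \<Rightarrow> (real \<Rightarrow> ('a \<Rightarrow> real) \<Rightarrow> 'a \<Rightarrow> real) \<Rightarrow> bool" where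
  "feller_resolvent S R \<longleftrightarrow>
     (\<forall>lam>0. \<forall>f\<in>Cfun S. R lam f \<in> Cfun S) \<and>
     (\<forall>lam>0. \<forall>f\<in>Cfun S. \<forall>g\<in>Cfun S. \<forall>a b::real.
         R lam (\<lambda>x. a * f x + b * g x) = (\<lambda>x. a * R lam f x + b * R lam g x)) \<and>
     (\<forall>lam>0. \<forall>f\<in>Cfun S. (\<forall>x. 0 \<le> f x) \<longrightarrow> (\<forall>x. 0 \<le> R lam f x)) \<and>
     (\<forall>lam>0. \<forall>x. lam * R lam (indicator S) x \<le> 1) \<and>
     (\<forall>lam>0. \<forall>mu>0. \<forall>f\<in>Cfun S.
         (\<lambda>x. R lam f x - R mu f x) = (\<lambda>x. (mu - lam) * R lam (R mu f) x)) \<and>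
     (\<forall>f\<in>Cfun S. uniform_limit S (\<lambda>t x. t * R t f x) f at_top)"

(* graph of the generator A determined by the resolvent: A (R lam g) = lam R lam g - g *)
definition generator :: "'a::topological_space set \<Rightarrow> (real \<Rightarrow> ('a \<Rightarrow> real) \<Rightarrow> 'a \<Rightarrow> real) \<Rightarrow> (('a \<Rightarrow> real) \<times> ('a \<Rightarrow> real)) set" where
  "generator S R = {(h, k). \<exists>lam>0. \<exists>g\<in>Cfun S. h = R lam g \<and> k = (\<lambda>x. lam * h x - g x)}"

definition trivial_kernel :: "'a::topological_space set \<Rightarrow> (real \<Rightarrow> ('a \<Rightarrow> real) \<Rightarrow> 'a \<Rightarrow> real) \<Rightarrow> bool" where
  "trivial_kernel S R \<longleftrightarrow>
     (\<forall>(h, k)\<in>generator S R. (\<forall>x\<in>S. k x = 0) \<longrightarrow> (\<forall>x\<in>S. h x = 0))"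

definition conservative :: "'a set \<Rightarrow> (real \<Rightarrow> ('a \<Rightarrow> real) \<Rightarrow> 'a \<Rightarrow> real) \<Rightarrow> bool" where
  "conservative S R \<longleftrightarrow> (\<forall>lam>0. \<forall>x\<in>S. lam * R lam (indicator S) x = 1)"

definition IJ :: "nat \<Rightarrow> (nat \<Rightarrow> nat) \<Rightarrow> (nat \<times> nat) set" where
  "IJ M \<kappa> = Sigma {1..M} (\<lambda>i. {1..\<kappa> i})"

definition ell :: "(nat \<Rightarrow> real \<Rightarrow> ('a \<Rightarrow> real) \<Rightarrow> 'a \<Rightarrow> real) \<Rightarrow> (nat \<Rightarrow> nat \<Rightarrow> 'a \<Rightarrow> real)
                   \<Rightarrow> nat \<Rightarrow> nat \<Rightarrow> real \<Rightarrow> 'a \<Rightarrow> real" where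
  "ell R phi i j lam = (\<lambda>x. phi i j x - lam * R i lam (phi i j) x)"

definition Rdu :: "(nat \<Rightarrow> 'a set) \<Rightarrow> nat \<Rightarrow> (nat \<Rightarrow> real \<Rightarrow> ('a \<Rightarrow> real) \<Rightarrow> 'a \<Rightarrow> real)
                   \<Rightarrow> real \<Rightarrow> ('a \<Rightarrow> real) \<Rightarrow> 'a \<Rightarrow> real" where
  "Rdu S N R lam f = (\<lambda>x. \<Sum>i\<in>{1..N}. R i lam (restr (S i) f) x)"

definition Nop :: "(nat \<Rightarrow> 'a set) \<Rightarrow> nat \<Rightarrow> (nat \<Rightarrow> nat) \<Rightarrow> (nat \<Rightarrow> real \<Rightarrow> ('a \<Rightarrow> real) \<Rightarrow> 'a \<Rightarrow> real)
     \<Rightarrow> (nat \<Rightarrow> nat \<Rightarrow> 'a \<Rightarrow> real) \<Rightarrow> (nat \<times> nat \<Rightarrow> 'a measure) \<Rightarrow> real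
     \<Rightarrow> (nat \<times> nat \<Rightarrow> real) \<Rightarrow> nat \<times> nat \<Rightarrow> real" where
  "Nop S M \<kappa> R phi p lam w = (\<lambda>ij. \<Sum>kl\<in>IJ M \<kappa>.
      w kl * set_lebesgue_integral (p ij) (S (fst kl)) (ell R phi (fst kl) (snd kl) lam))"

definition vvec :: "(nat \<Rightarrow> 'a set) \<Rightarrow> nat \<Rightarrow> nat \<Rightarrow> (nat \<Rightarrow> nat) \<Rightarrow> (nat \<Rightarrow> real \<Rightarrow> ('a \<Rightarrow> real) \<Rightarrow> 'a \<Rightarrow> real)
     \<Rightarrow> (nat \<times> nat \<Rightarrow> 'a measure) \<Rightarrow> ('a \<Rightarrow> real) \<Rightarrow> real \<Rightarrow> nat \<times> nat \<Rightarrow> real" where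
  "vvec S N M \<kappa> R p f lam = (\<lambda>ij. integral\<^sup>L (p ij) (Rdu S N R lam f))"

(* u(f,lam) = M_lam^{-1} v(f,lam), M_lam = I - N_lam, as the unique vector on IJ
   solving  w - N_lam w = v(f,lam) *)
definition uvec :: "(nat \<Rightarrow> 'a set) \<Rightarrow> nat \<Rightarrow> nat \<Rightarrow> (nat \<Rightarrow> nat) \<Rightarrow> (nat \<Rightarrow> real \<Rightarrow> ('a \<Rightarrow> real) \<Rightarrow> 'a \<Rightarrow> real)
     \<Rightarrow> (nat \<Rightarrow> nat \<Rightarrow> 'a \<Rightarrow> real) \<Rightarrow> (nat \<times> nat \<Rightarrow> 'a measure) \<Rightarrow> ('a \<Rightarrow> real) \<Rightarrow> real
     \<Rightarrow> nat \<times> nat \<Rightarrow> real" where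
  "uvec S N M \<kappa> R phi p f lam = (THE w. w \<in> extensional (IJ M \<kappa>) \<and>
      (\<forall>ij\<in>IJ M \<kappa>. w ij - Nop S M \<kappa> R phi p lam w ij = vvec S N M \<kappa> R p f lam ij))"

definition Rco :: "(nat \<Rightarrow> 'a set) \<Rightarrow> nat \<Rightarrow> nat \<Rightarrow> (nat \<Rightarrow> nat) \<Rightarrow> (nat \<Rightarrow> real \<Rightarrow> ('a \<Rightarrow> real) \<Rightarrow> 'a \<Rightarrow> real)
     \<Rightarrow> (nat \<Rightarrow> nat \<Rightarrow> 'a \<Rightarrow> real) \<Rightarrow> (nat \<times> nat \<Rightarrow> 'a measure) \<Rightarrow> real \<Rightarrow> ('a \<Rightarrow> real) \<Rightarrow> 'a \<Rightarrow> real" where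
  "Rco S N M \<kappa> R phi p lam f = (\<lambda>x. Rdu S N R lam f x +
      (\<Sum>ij\<in>IJ M \<kappa>. uvec S N M \<kappa> R phi p f lam ij * ell R phi (fst ij) (snd ij) lam x))"

end

theory Submission
  imports Defs
begin

lemma lin_unique:
  fixes a :: "'i \<Rightarrow> 'i \<Rightarrow> real"
  assumes fin: "finite I" and c: "c < 1" "0 \<le> c"
    and bnd: "\<forall>i\<in>I. (\<Sum>k\<in>I. \<bar>a i k\<bar>) \<le> c"
    and d: "\<forall>i\<in>I. d i = (\<Sum>k\<in>I. d k * a i k)"
  shows "\<forall>i\<in>I. d i = 0"
proof (cases "I = {}")
  case True then show ?thesis by simp
next
  case False
  define B where "B = Max ((\<lambda>i. \<bar>d i\<bar>) ` I)"
  have dB: "\<bar>d k\<bar> \<le> B" if "k \<in> I" for k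
    unfolding B_def using fin that by (intro Max_ge) auto
  have B0: "0 \<le> B" using dB False by fastforce
  have "\<bar>d i\<bar> \<le> c * B" if i: "i \<in> I" for i
  proof -
    have "\<bar>d i\<bar> = \<bar>\<Sum>k\<in>I. d k * a i k\<bar>" using d i by simp
    also have "\<dots> \<le> (\<Sum>k\<in>I. \<bar>d k * a i k\<bar>)" by (rule sum_abs)
    also have "\<dots> \<le> (\<Sum>k\<in>I. B * \<bar>a i k\<bar>)"
      by (intro sum_mono) (auto simp: abs_mult intro!: mult_right_mono dB)
    also have "\<dots> = B * (\<Sum>k\<in>I. \<bar>a i k\<bar>)" by (simp add: sum_distrib_left)
    also have "\<dots> \<le> B * c" using bnd i B0 by (simp add: mult_left_mono)
    finally show ?thesis by (simp add: mult.commute)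
  qed
  hence "B \<le> c * B" unfolding B_def using fin False
    by (subst Max_le_iff) auto
  hence "B = 0" using B0 c by (smt (verit) mult_le_cancel_right1 mult_nonneg_nonneg)
  then show ?thesis using dB by fastforce
qed

lemma lin_exists:
  fixes a :: "'i \<Rightarrow> 'i \<Rightarrow> real"
  assumes fin: "finite I" and c: "c < 1" "0 \<le> c"
    and bnd: "\<forall>i\<in>I. (\<Sum>k\<in>I. \<bar>a i k\<bar>) \<le> c"
  shows "\<exists>w. \<forall>i\<in>I. w i - (\<Sum>k\<in>I. w k * a i k) = V i"
proof -
  define W where "W = rec_nat (\<lambda>_. 0) (\<lambda>n w. (\<lambda>i. V i + (\<Sum>k\<in>I. w k * a i k)))"
  have W0: "W 0 = (\<lambda>_. 0)" and WS: "\<And>n. W (Suc n) = (\<lambda>i. V i + (\<Sum>k\<in>I. W n k * a i k))"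
    by (simp_all add: W_def)
  define D where "D n i = W (Suc n) i - W n i" for n i
  define B where "B = (\<Sum>i\<in>I. \<bar>V i\<bar>)"
  have B0: "0 \<le> B" unfolding B_def by (simp add: sum_nonneg)
  have DS: "D (Suc n) i = (\<Sum>k\<in>I. D n k * a i k)" for n i
    unfolding D_def WS by (simp add: sum_subtractf algebra_simps)
  have Dbnd: "\<forall>i\<in>I. \<bar>D n i\<bar> \<le> c ^ n * B" for n
  proof (induction n)
    case 0
    show ?case unfolding D_def W0 WS B_def using fin
      by (auto intro: member_le_sum)
  next
    case (Suc n)
    show ?case
    proof
      fix i assume i: "i \<in> I"
      have "\<bar>D (Suc n) i\<bar> \<le> (\<Sum>k\<in>I. \<bar>D n k * a i k\<bar>)" unfolding DS by (rule sum_abs)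
      also have "\<dots> \<le> (\<Sum>k\<in>I. (c ^ n * B) * \<bar>a i k\<bar>)"
        using Suc.IH by (intro sum_mono) (auto simp: abs_mult intro!: mult_right_mono)
      also have "\<dots> = (c ^ n * B) * (\<Sum>k\<in>I. \<bar>a i k\<bar>)" by (simp add: sum_distrib_left)
      also have "\<dots> \<le> (c ^ n * B) * c" using bnd i B0 c by (simp add: mult_left_mono)
      finally show "\<bar>D (Suc n) i\<bar> \<le> c ^ Suc n * B" by (simp add: algebra_simps)
    qed
  qed
  define L where "L i = suminf (\<lambda>n. D n i)" for i
  have WL: "(\<lambda>n. W n i) \<longlonglongrightarrow> L i" if i: "i \<in> I" for i
  proof -
    have "summable (\<lambda>n. c ^ n * B)" using c by (intro summable_mult2 summable_geometric) simp
    hence sm: "summable (\<lambda>n. D n i)"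
      by (rule summable_comparison_test') (use Dbnd i in auto)
    have "(\<lambda>n. \<Sum>m<n. D m i) \<longlonglongrightarrow> L i" unfolding L_def by (rule summable_LIMSEQ[OF sm])
    moreover have "(\<Sum>m<n. D m i) = W n i" for n
      unfolding D_def using sum_lessThan_telescope[of "\<lambda>m. W m i" n] by (simp add: W0)
    ultimately show ?thesis by simp
  qed
  have "L i - (\<Sum>k\<in>I. L k * a i k) = V i" if i: "i \<in> I" for i
  proof -
    have "(\<lambda>n. W (Suc n) i) \<longlonglongrightarrow> L i" using WL[OF i] by (rule LIMSEQ_Suc)
    moreover have "(\<lambda>n. W (Suc n) i) \<longlonglongrightarrow> V i + (\<Sum>k\<in>I. L k * a i k)"
      unfolding WS by (intro tendsto_intros WL) 
    ultimately show ?thesis using LIMSEQ_unique by fastforce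
  qed
  then show ?thesis by blast
qed

lemma lin_ex1:
  fixes a :: "'i \<Rightarrow> 'i \<Rightarrow> real"
  assumes fin: "finite I" and c: "c < 1" "0 \<le> c"
    and bnd: "\<forall>i\<in>I. (\<Sum>k\<in>I. \<bar>a i k\<bar>) \<le> c"
  shows "\<exists>!w. w \<in> extensional I \<and> (\<forall>i\<in>I. w i - (\<Sum>k\<in>I. w k * a i k) = V i)"
proof -
  obtain w where w: "\<forall>i\<in>I. w i - (\<Sum>k\<in>I. w k * a i k) = V i"
    using lin_exists[OF assms] by blast
  let ?w = "restrict w I"
  have ex: "?w \<in> extensional I \<and> (\<forall>i\<in>I. ?w i - (\<Sum>k\<in>I. ?w k * a i k) = V i)"
    using w by simp
  show ?thesis
  proof (rule ex1I[where a="?w"])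
    show "?w \<in> extensional I \<and> (\<forall>i\<in>I. ?w i - (\<Sum>k\<in>I. ?w k * a i k) = V i)" by (rule ex)
  next
    fix y assume y: "y \<in> extensional I \<and> (\<forall>i\<in>I. y i - (\<Sum>k\<in>I. y k * a i k) = V i)"
    have "\<forall>i\<in>I. (y i - ?w i) = (\<Sum>k\<in>I. (y k - ?w k) * a i k)"
    proof
      fix i assume i: "i \<in> I"
      have "(\<Sum>k\<in>I. (y k - ?w k) * a i k) = (\<Sum>k\<in>I. y k * a i k) - (\<Sum>k\<in>I. ?w k * a i k)"
        by (simp add: sum_subtractf algebra_simps)
      moreover have "y i - (\<Sum>k\<in>I. y k * a i k) = V i" using y i by blast
      moreover have "?w i - (\<Sum>k\<in>I. ?w k * a i k) = V i" using ex i by blast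
      ultimately show "(y i - ?w i) = (\<Sum>k\<in>I. (y k - ?w k) * a i k)" by linarith
    qed
    from lin_unique[OF fin c bnd this] have "\<forall>i\<in>I. y i = ?w i" by simp
    then show "y = ?w" using y ex by (auto simp: extensional_def)
  qed
qed

lemma Cfun_lin: assumes "f \<in> Cfun S" "g \<in> Cfun S" shows "(\<lambda>x. a * f x + b * g x) \<in> Cfun S"
proof -
  have "continuous_on S f" "continuous_on S g" using assms by (simp_all add: Cfun_def)
  then have "continuous_on S (\<lambda>x. a * f x + b * g x)"
    by (intro continuous_on_add continuous_on_mult_left)
  moreover have "\<forall>x. x \<notin> S \<longrightarrow> a * f x + b * g x = 0" using assms by (simp add: Cfun_def)
  ultimately show ?thesis by (simp add: Cfun_def)
qed

lemma Cfun_zero: "(\<lambda>x. 0) \<in> Cfun S"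
  unfolding Cfun_def by auto

lemma Cfun_sum: assumes "(\<forall>a\<in>A. g a \<in> Cfun S)" shows "(\<lambda>x. \<Sum>a\<in>A. c a * g a x) \<in> Cfun S"
proof -
  have "continuous_on S (\<lambda>x. \<Sum>a\<in>A. c a * g a x)"
    using assms by (intro continuous_on_sum continuous_on_mult_left) (simp add: Cfun_def)
  moreover have "\<forall>x. x \<notin> S \<longrightarrow> (\<Sum>a\<in>A. c a * g a x) = 0" using assms by (simp add: Cfun_def)
  ultimately show ?thesis by (simp add: Cfun_def)
qed

lemma Cfun_cont:
  assumes "f \<in> Cfun S" "open S" "closed S"
  shows "continuous_on UNIV f"
proof -
  have "continuous_on (S \<union> (- S)) f"
  proof (rule continuous_on_closed_Un)
    show "continuous_on S f" using assms unfolding Cfun_def by auto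
    have "continuous_on (- S) (\<lambda>x. 0::real)" by simp
    then show "continuous_on (- S) f"
      by (rule continuous_on_eq) (use assms(1) in \<open>simp add: Cfun_def\<close>)
    show "closed S" by (rule assms(3))
    show "closed (- S)" using assms(2) by (simp add: closed_Compl)
  qed
  then show ?thesis by (simp add: Un_commute)
qed

lemma Cfun_restr:
  assumes "continuous_on UNIV g" shows "restr S g \<in> Cfun S"
proof -
  have "continuous_on S g" using assms by (rule continuous_on_subset) simp
  then have "continuous_on S (restr S g)"
    by (rule continuous_on_eq) (simp add: restr_def)
  moreover have "\<forall>x. x \<notin> S \<longrightarrow> restr S g x = 0" by (simp add: restr_def)
  ultimately show ?thesis unfolding Cfun_def by blast
qed

lemma Cfun_ind: "indicator S \<in> Cfun S"
proof -
  have "continuous_on S (\<lambda>_. 1::real)" by simp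
  then have "continuous_on S (indicator S :: _ \<Rightarrow> real)"
    by (rule continuous_on_eq) (auto simp: indicator_def)
  moreover have "\<forall>x. x \<notin> S \<longrightarrow> indicator S x = (0::real)" by simp
  ultimately show ?thesis unfolding Cfun_def by blast
qed

context
  fixes S and R :: "real \<Rightarrow> ('a::topological_space \<Rightarrow> real) \<Rightarrow> 'a \<Rightarrow> real"
  assumes F: "feller_resolvent S R"
begin

lemmas FF = F[unfolded feller_resolvent_def]

lemma FC: "t > 0 \<Longrightarrow> f \<in> Cfun S \<Longrightarrow> R t f \<in> Cfun S"
  using FF[THEN conjunct1] by blast

lemma Flin: "t > 0 \<Longrightarrow> f \<in> Cfun S \<Longrightarrow> g \<in> Cfun S \<Longrightarrow>
   R t (\<lambda>x. a * f x + b * g x) = (\<lambda>x. a * R t f x + b * R t g x)"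
  using FF[THEN conjunct2, THEN conjunct1] by blast

lemma Fpos: "t > 0 \<Longrightarrow> f \<in> Cfun S \<Longrightarrow> (\<forall>x. 0 \<le> f x) \<Longrightarrow> 0 \<le> R t f x"
  using FF[THEN conjunct2, THEN conjunct2, THEN conjunct1] by blast

lemma Fone: "t > 0 \<Longrightarrow> t * R t (indicator S) x \<le> 1"
  using FF[THEN conjunct2, THEN conjunct2, THEN conjunct2, THEN conjunct1] by blast

lemma Fres: assumes "t > 0" "s > 0" "f \<in> Cfun S" shows "R t f x - R s f x = (s - t) * R t (R s f) x"
proof -
  have "(\<lambda>x. R t f x - R s f x) = (\<lambda>x. (s - t) * R t (R s f) x)"
    using FF[THEN conjunct2, THEN conjunct2, THEN conjunct2, THEN conjunct2, THEN conjunct1] assms by blast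
  then show ?thesis by (rule fun_cong)
qed

lemma Flim: "f \<in> Cfun S \<Longrightarrow> uniform_limit S (\<lambda>t x. t * R t f x) f at_top"
  using FF[THEN conjunct2, THEN conjunct2, THEN conjunct2, THEN conjunct2, THEN conjunct2] by blast

lemma Fzero: "t > 0 \<Longrightarrow> R t (\<lambda>x. 0) = (\<lambda>x. 0)"
proof -
  assume t: "t > 0"
  have "R t (\<lambda>x. 0 * 0 + 0 * 0) = (\<lambda>x. 0 * R t (\<lambda>x. 0) x + 0 * R t (\<lambda>x. 0) x)"
    by (rule Flin[OF t Cfun_zero Cfun_zero])
  then show ?thesis by simp
qed

lemma Fsum: assumes t: "t > 0" and "finite A" "(\<forall>a\<in>A. g a \<in> Cfun S)" shows
   "R t (\<lambda>x. \<Sum>a\<in>A. c a * g a x) = (\<lambda>x. \<Sum>a\<in>A. c a * R t (g a) x)"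
  using assms(2,3)
proof (induction A rule: finite_induct)
  case empty then show ?case using Fzero[OF t] by simp
next
  case (insert a A)
  have "R t (\<lambda>x. \<Sum>a\<in>insert a A. c a * g a x) = R t (\<lambda>x. c a * g a x + 1 * (\<Sum>a\<in>A. c a * g a x))"
    using insert by simp
  also have "\<dots> = (\<lambda>x. c a * R t (g a) x + 1 * R t (\<lambda>x. \<Sum>a\<in>A. c a * g a x) x)"
    using insert t by (intro Flin Cfun_sum) auto
  also have "\<dots> = (\<lambda>x. \<Sum>a\<in>insert a A. c a * R t (g a) x)" using insert by simp
  finally show ?case .
qed

lemma Fpos_ind:
  assumes x: "x \<in> S" and t: "t > 0"
  shows "R t (indicator S) x > 0"
proof (rule ccontr)
  assume "\<not> R t (indicator S) x > 0"
  moreover have "0 \<le> R t (indicator S) x" using Fpos[OF t Cfun_ind] by simp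
  ultimately have z: "R t (indicator S) x = 0" by simp
  have zs: "s * R s (indicator S) x = 0" if s: "s > 0" for s
  proof -
    let ?g = "R s (indicator S)"
    have gC: "?g \<in> Cfun S" using FC[OF s Cfun_ind] .
    have hnn: "\<forall>y. 0 \<le> (1/s) * indicator S y + (-1) * ?g y"
    proof
      fix y show "0 \<le> (1/s) * indicator S y + (-1) * ?g y"
      proof (cases "y \<in> S")
        case True
        have "s * ?g y \<le> 1" using Fone[OF s] .
        then have "?g y \<le> 1/s" using s by (simp add: field_simps)
        then show ?thesis using True by simp
      next
        case False then show ?thesis using gC by (simp add: Cfun_def)
      qed
    qed
    have "0 \<le> R t (\<lambda>y. (1/s) * indicator S y + (-1) * ?g y) x"
      by (rule Fpos[OF t Cfun_lin[OF Cfun_ind gC] hnn])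
    also have "\<dots> = (1/s) * R t (indicator S) x - R t ?g x"
      using Flin[OF t Cfun_ind gC, of "1/s" "-1"] by simp
    finally have "R t ?g x \<le> 0" using z by simp
    moreover have "0 \<le> R t ?g x" using Fpos[OF t gC] FC Fpos[OF s Cfun_ind] by simp
    ultimately have "R t ?g x = 0" by simp
    then have "R s (indicator S) x = 0" using Fres[OF t s Cfun_ind, of x] z by simp
    then show ?thesis by simp
  qed
  have "((\<lambda>s. s * R s (indicator S) x) \<longlongrightarrow> indicator S x) at_top"
    using tendsto_uniform_limitI[OF Flim[OF Cfun_ind] x] .
  moreover have ev: "eventually (\<lambda>s. s * R s (indicator S) x = 0) at_top"
    using eventually_gt_at_top[of 0] by eventually_elim (simp add: zs)
  ultimately have "((\<lambda>s::real. 0::real) \<longlongrightarrow> indicator S x) at_top"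
    using tendsto_cong[OF ev] by simp
  then have "indicator S x = (0::real)" by (simp add: tendsto_const_iff)
  then show False using x by simp
qed

end

locale setting =
  fixes S :: "nat \<Rightarrow> 'a::metric_space set" and N M :: nat
    and R :: "nat \<Rightarrow> real \<Rightarrow> ('a \<Rightarrow> real) \<Rightarrow> 'a \<Rightarrow> real"
    and \<kappa> :: "nat \<Rightarrow> nat" and phi :: "nat \<Rightarrow> nat \<Rightarrow> 'a \<Rightarrow> real"
    and p :: "nat \<times> nat \<Rightarrow> 'a measure"
  assumes MN: "M \<le> N"
    and clopen: "\<forall>i\<in>{1..N}. compact (S i) \<and> open (S i)"
    and disj: "\<forall>i\<in>{1..N}. \<forall>j\<in>{1..N}. i \<noteq> j \<longrightarrow> S i \<inter> S j = {}"
    and cover: "(\<Union>i\<in>{1..N}. S i) = UNIV"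
    and feller: "\<forall>i\<in>{1..N}. feller_resolvent (S i) (R i)"
    and phiC: "\<forall>(i, j)\<in>IJ M \<kappa>. phi i j \<in> Cfun (S i) \<and> (\<forall>x. 0 \<le> phi i j x \<and> phi i j x \<le> indicator (S i) x)"
    and phisub: "\<forall>(i, j)\<in>IJ M \<kappa>. \<forall>t>0. \<forall>x. t * R i t (phi i j) x \<le> phi i j x"
    and phisum: "\<forall>i\<in>{1..M}. \<forall>x. (\<Sum>j\<in>{1..\<kappa> i}. phi i j x) = indicator (S i) x"
    and prob: "\<forall>ij\<in>IJ M \<kappa>. subprob_space (p ij) \<and> sets (p ij) = sets borel"
begin

abbreviation "I \<equiv> IJ M \<kappa>"

definition aa where
  "aa t ij kl = set_lebesgue_integral (p ij) (S (fst kl)) (ell R phi (fst kl) (snd kl) t)"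

lemma Nop_aa: "Nop S M \<kappa> R phi p t w ij = (\<Sum>kl\<in>I. w kl * aa t ij kl)"
  unfolding Nop_def aa_def by simp

lemma finI: "finite I"
  unfolding IJ_def by auto

lemma I_mem: "(k, l) \<in> I \<Longrightarrow> k \<in> {1..M} \<and> k \<in> {1..N} \<and> l \<in> {1..\<kappa> k}"
  unfolding IJ_def using MN by auto

lemma closedS: "i \<in> {1..N} \<Longrightarrow> closed (S i)"
  using clopen compact_imp_closed by blast

lemma openS: "i \<in> {1..N} \<Longrightarrow> open (S i)"
  using clopen by blast

lemma other: "i \<in> {1..N} \<Longrightarrow> k \<in> {1..N} \<Longrightarrow> x \<in> S i \<Longrightarrow> k \<noteq> i \<Longrightarrow> x \<notin> S k"
  using disj by blast

lemma Fi: "i \<in> {1..N} \<Longrightarrow> feller_resolvent (S i) (R i)"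
  using feller by blast

lemma phi_C: "(k, l) \<in> I \<Longrightarrow> phi k l \<in> Cfun (S k)"
  using phiC by fast

lemma ell_C: assumes "(k, l) \<in> I" "t > 0" shows "ell R phi k l t \<in> Cfun (S k)"
proof -
  have k: "k \<in> {1..N}" using I_mem[OF assms(1)] by simp
  have "(\<lambda>x. 1 * phi k l x + (- t) * R k t (phi k l) x) \<in> Cfun (S k)"
    by (intro Cfun_lin phi_C[OF assms(1)] FC[OF Fi[OF k] assms(2)])
  then show ?thesis unfolding ell_def by simp
qed

lemma Cfun_zero_out: "g \<in> Cfun T \<Longrightarrow> x \<notin> T \<Longrightarrow> g x = 0"
  unfolding Cfun_def by blast

lemma ell_nonneg: assumes "(k, l) \<in> I" "t > 0" shows "0 \<le> ell R phi k l t x"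
proof -
  have "t * R k t (phi k l) x \<le> phi k l x" using phisub assms by fast
  then show ?thesis unfolding ell_def by simp
qed

lemma ell_cont: assumes "(k, l) \<in> I" "t > 0" shows "continuous_on UNIV (ell R phi k l t)"
  using I_mem[OF assms(1)] by (intro Cfun_cont[OF ell_C[OF assms]] openS closedS) auto

lemma RC: "i \<in> {1..N} \<Longrightarrow> t > 0 \<Longrightarrow> continuous_on UNIV g \<Longrightarrow> R i t (restr (S i) g) \<in> Cfun (S i)"
  by (intro FC[OF Fi] Cfun_restr)

lemma Rdu_cont: assumes "t > 0" "continuous_on UNIV g" shows "continuous_on UNIV (Rdu S N R t g)"
  unfolding Rdu_def
  by (intro continuous_on_sum Cfun_cont[OF RC] openS closedS) (use assms in auto)

lemma Rdu_at:
  assumes i: "i \<in> {1..N}" and x: "x \<in> S i" and t: "t > 0" and g: "continuous_on UNIV g"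
  shows "Rdu S N R t g x = R i t (restr (S i) g) x"
proof -
  have "Rdu S N R t g x = R i t (restr (S i) g) x + (\<Sum>k\<in>{1..N} - {i}. R k t (restr (S k) g) x)"
    unfolding Rdu_def using i by (simp add: sum.remove)
  also have "(\<Sum>k\<in>{1..N} - {i}. R k t (restr (S k) g) x) = 0"
  proof (intro sum.neutral ballI)
    fix k assume k: "k \<in> {1..N} - {i}"
    then have "x \<notin> S k" using other[OF i _ x] by blast
    then show "R k t (restr (S k) g) x = 0" using k by (intro Cfun_zero_out[OF RC[OF _ t g]]) auto
  qed
  finally show ?thesis by simp
qed

lemma Rco_cont: assumes "t > 0" "continuous_on UNIV g"
  shows "continuous_on UNIV (Rco S N M \<kappa> R phi p t g)"
  unfolding Rco_def
  by (intro continuous_on_add Rdu_cont assms continuous_on_sum continuous_on_mult_left)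
     (use ell_cont assms in auto)

lemma compact_UNIV: "compact (UNIV :: 'a set)"
  using cover clopen by (metis compact_UN finite_atLeastAtMost)

lemma integrable_cont:
  fixes h :: "'a \<Rightarrow> real"
  assumes ij: "ij \<in> I" and h: "continuous_on UNIV h"
  shows "integrable (p ij) h"
proof -
  have sp: "subprob_space (p ij)" and se: "sets (p ij) = sets borel" using prob ij by auto
  have "compact (h ` UNIV)" by (rule compact_continuous_image[OF h compact_UNIV])
  then obtain B where B: "\<forall>y\<in>range h. norm y \<le> B" using compact_imp_bounded bounded_iff by metis
  have meas: "h \<in> borel_measurable (p ij)"
    by (subst measurable_cong_sets[OF se refl]) (rule borel_measurable_continuous_onI[OF h])
  have fm: "finite_measure (p ij)" using sp by (simp add: subprob_space_def)
  have ae: "AE x in p ij. norm (h x) \<le> B" using B by simp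
  show ?thesis
    by (rule finite_measure.integrable_const_bound[OF fm ae meas])
qed

lemma aa_int: assumes "kl \<in> I" "t > 0"
  shows "aa t ij kl = integral\<^sup>L (p ij) (ell R phi (fst kl) (snd kl) t)"
proof -
  obtain k l where kl: "kl = (k, l)" by fastforce
  have "(\<lambda>x. indicator (S k) x *\<^sub>R ell R phi k l t x) = ell R phi k l t"
  proof
    fix x show "indicator (S k) x *\<^sub>R ell R phi k l t x = ell R phi k l t x"
      using Cfun_zero_out[OF ell_C[OF assms(1)[unfolded kl] assms(2)], of x] by (cases "x \<in> S k") auto
  qed
  then show ?thesis unfolding aa_def set_lebesgue_integral_def kl by simp
qed

end

context setting begin

lemma sum_I: "(\<Sum>kl\<in>I. F kl) = (\<Sum>i\<in>{1..M}. \<Sum>l\<in>{1..\<kappa> i}. F (i, l))"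
  unfolding IJ_def by (subst sum.Sigma) auto

lemma h_lt:
  assumes t: "t > 0"
  shows "(\<Sum>kl\<in>I. ell R phi (fst kl) (snd kl) t x) < 1"
proof -
  obtain k0 where k0: "k0 \<in> {1..N}" "x \<in> S k0" using cover by blast
  have zero: "(\<Sum>l\<in>{1..\<kappa> i}. ell R phi i l t x) = 0" if i: "i \<in> {1..M}" "i \<noteq> k0" for i
  proof (intro sum.neutral ballI)
    fix l assume l: "l \<in> {1..\<kappa> i}"
    have il: "(i, l) \<in> I" using i l unfolding IJ_def by auto
    have "x \<notin> S i" using other[OF k0(1) _ k0(2)] i MN by auto
    then show "ell R phi i l t x = 0" by (rule Cfun_zero_out[OF ell_C[OF il t]])
  qed
  have eq: "(\<Sum>kl\<in>I. ell R phi (fst kl) (snd kl) t x) = (\<Sum>i\<in>{1..M}. \<Sum>l\<in>{1..\<kappa> i}. ell R phi i l t x)"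
    using sum_I[of "\<lambda>kl. ell R phi (fst kl) (snd kl) t x"] by simp
  show ?thesis
  proof (cases "k0 \<in> {1..M}")
    case False
    then have "(\<Sum>i\<in>{1..M}. \<Sum>l\<in>{1..\<kappa> k0}. ell R phi i l t x) = 0 \<or> True" by simp
    have "(\<Sum>i\<in>{1..M}. \<Sum>l\<in>{1..\<kappa> i}. ell R phi i l t x) = 0"
      using zero False by (intro sum.neutral) auto
    then show ?thesis using eq by simp
  next
    case True
    have "(\<Sum>i\<in>{1..M}. \<Sum>l\<in>{1..\<kappa> i}. ell R phi i l t x)
        = (\<Sum>l\<in>{1..\<kappa> k0}. ell R phi k0 l t x) + (\<Sum>i\<in>{1..M} - {k0}. \<Sum>l\<in>{1..\<kappa> i}. ell R phi i l t x)"
      using True by (simp add: sum.remove)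
    also have "(\<Sum>i\<in>{1..M} - {k0}. \<Sum>l\<in>{1..\<kappa> i}. ell R phi i l t x) = 0"
      using zero by (intro sum.neutral) auto
    also have "(\<Sum>l\<in>{1..\<kappa> k0}. ell R phi k0 l t x)
        = (\<Sum>l\<in>{1..\<kappa> k0}. phi k0 l x) - t * (\<Sum>l\<in>{1..\<kappa> k0}. 1 * R k0 t (phi k0 l) x)"
      unfolding ell_def by (simp add: sum_subtractf sum_distrib_left)
    also have "(\<Sum>l\<in>{1..\<kappa> k0}. phi k0 l x) = 1" using phisum True k0 by simp
    also have "(\<Sum>l\<in>{1..\<kappa> k0}. 1 * R k0 t (phi k0 l) x) = R k0 t (indicator (S k0)) x"
    proof -
      have "indicator (S k0) = (\<lambda>y. \<Sum>l\<in>{1..\<kappa> k0}. 1 * phi k0 l y)"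
        using phisum True by (auto simp: fun_eq_iff)
      then have "R k0 t (indicator (S k0)) = (\<lambda>y. \<Sum>l\<in>{1..\<kappa> k0}. 1 * R k0 t (phi k0 l) y)"
        using Fsum[OF Fi[OF k0(1)] t, of "{1..\<kappa> k0}" "phi k0" "\<lambda>_. 1"] phi_C True
        unfolding IJ_def by auto
      then show ?thesis by simp
    qed
    finally have "(\<Sum>i\<in>{1..M}. \<Sum>l\<in>{1..\<kappa> i}. ell R phi i l t x) = 1 - t * R k0 t (indicator (S k0)) x"
      by simp
    moreover have "R k0 t (indicator (S k0)) x > 0" by (rule Fpos_ind[OF Fi[OF k0(1)] k0(2) t])
    ultimately show ?thesis using eq t by simp
  qed
qed

lemma bound:
  assumes t: "t > 0"
  shows "\<exists>c. 0 \<le> c \<and> c < 1 \<and> (\<forall>ij\<in>I. (\<Sum>kl\<in>I. \<bar>aa t ij kl\<bar>) \<le> c)"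
proof -
  define h where "h x = (\<Sum>kl\<in>I. ell R phi (fst kl) (snd kl) t x)" for x
  have hc: "continuous_on UNIV h" unfolding h_def
    by (intro continuous_on_sum) (use ell_cont t in auto)
  obtain x0 where x0: "\<forall>y. h y \<le> h x0"
    using continuous_attains_sup[OF compact_UNIV _ hc] by auto
  define c where "c = h x0"
  have c0: "0 \<le> c" unfolding c_def h_def
    by (intro sum_nonneg) (use ell_nonneg t in auto)
  have c1: "c < 1" unfolding c_def h_def by (rule h_lt[OF t])
  have "(\<Sum>kl\<in>I. \<bar>aa t ij kl\<bar>) \<le> c" if ij: "ij \<in> I" for ij
  proof -
    have sp: "subprob_space (p ij)" and se: "sets (p ij) = sets borel" using prob ij by auto
    have "(\<Sum>kl\<in>I. \<bar>aa t ij kl\<bar>) = (\<Sum>kl\<in>I. integral\<^sup>L (p ij) (ell R phi (fst kl) (snd kl) t))"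
    proof (intro sum.cong refl)
      fix kl assume kl: "kl \<in> I"
      have "0 \<le> integral\<^sup>L (p ij) (ell R phi (fst kl) (snd kl) t)"
        using kl t by (intro Bochner_Integration.integral_nonneg ell_nonneg) auto
      then show "\<bar>aa t ij kl\<bar> = integral\<^sup>L (p ij) (ell R phi (fst kl) (snd kl) t)"
        using aa_int[OF kl t] by simp
    qed
    also have "\<dots> = integral\<^sup>L (p ij) h"
      unfolding h_def
      by (rule Bochner_Integration.integral_sum[symmetric])
         (use integrable_cont[OF ij] ell_cont t in auto)
    also have "\<dots> \<le> integral\<^sup>L (p ij) (\<lambda>_. c)"
      by (intro integral_mono integrable_cont[OF ij] hc) (use x0 c_def in auto)
    also have "\<dots> = measure (p ij) (space (p ij)) * c" by simp
    also have "\<dots> \<le> 1 * c"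
      using subprob_space.subprob_measure_le_1[OF sp] c0 by (intro mult_right_mono) auto
    finally show ?thesis by simp
  qed
  then show ?thesis using c0 c1 by blast
qed

lemma uvec_ex1:
  assumes t: "t > 0"
  shows "\<exists>!w. w \<in> extensional I \<and> (\<forall>ij\<in>I. w ij - Nop S M \<kappa> R phi p t w ij = vvec S N M \<kappa> R p g t ij)"
proof -
  obtain c where c: "0 \<le> c" "c < 1" "\<forall>ij\<in>I. (\<Sum>kl\<in>I. \<bar>aa t ij kl\<bar>) \<le> c"
    using bound[OF t] by blast
  show ?thesis unfolding Nop_aa by (rule lin_ex1[OF finI c(2,1,3)])
qed

lemma uvec_prop:
  assumes t: "t > 0"
  shows "uvec S N M \<kappa> R phi p g t \<in> extensional I \<and>
    (\<forall>ij\<in>I. uvec S N M \<kappa> R phi p g t ij - Nop S M \<kappa> R phi p t (uvec S N M \<kappa> R phi p g t) ij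
        = vvec S N M \<kappa> R p g t ij)"
  unfolding uvec_def by (rule theI'[OF uvec_ex1[OF t]])

lemma uvec_eq:
  assumes t: "t > 0" and w: "w \<in> extensional I \<and> (\<forall>ij\<in>I. w ij - Nop S M \<kappa> R phi p t w ij = vvec S N M \<kappa> R p g t ij)"
  shows "uvec S N M \<kappa> R phi p g t = w"
  unfolding uvec_def by (rule the1_equality[OF uvec_ex1[OF t, of g]]) (rule w)

end

context setting begin

lemma RG: assumes "i \<in> {1..N}" "lam > 0" "mu > 0" "h \<in> Cfun (S i)"
  shows "(lam - mu) * R i mu (R i lam h) x = R i mu h x - R i lam h x"
  using Fres[OF Fi[OF assms(1)] assms(3,2,4), of x] by simp

lemma ellR: assumes kl: "(k, l) \<in> I" and lam: "lam > 0" and mu: "mu > 0"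
  shows "(lam - mu) * R k mu (ell R phi k l lam) x = ell R phi k l mu x - ell R phi k l lam x"
proof -
  have k: "k \<in> {1..N}" using I_mem[OF kl] by simp
  have pC: "phi k l \<in> Cfun (S k)" by (rule phi_C[OF kl])
  have e0: "ell R phi k l lam = (\<lambda>x. 1 * phi k l x + (- lam) * R k lam (phi k l) x)"
    unfolding ell_def by simp
  have "R k mu (ell R phi k l lam) = R k mu (\<lambda>x. 1 * phi k l x + (- lam) * R k lam (phi k l) x)"
    by (simp only: e0)
  also have "\<dots> = (\<lambda>x. 1 * R k mu (phi k l) x + (- lam) * R k mu (R k lam (phi k l)) x)"
    by (rule Flin[OF Fi[OF k] mu pC FC[OF Fi[OF k] lam pC]])
  finally have e1: "R k mu (ell R phi k l lam) x = R k mu (phi k l) x + (- lam) * R k mu (R k lam (phi k l)) x"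
    by simp
  have e2: "(lam - mu) * R k mu (R k lam (phi k l)) x = R k mu (phi k l) x - R k lam (phi k l) x"
    by (rule RG[OF k lam mu pC])
  have "(lam - mu) * R k mu (ell R phi k l lam) x
      = (lam - mu) * R k mu (phi k l) x - lam * ((lam - mu) * R k mu (R k lam (phi k l)) x)"
    unfolding e1 by (simp add: algebra_simps)
  also have "\<dots> = ell R phi k l mu x - ell R phi k l lam x"
    unfolding e2 ell_def by (simp add: algebra_simps)
  finally show ?thesis .
qed

lemma restr_G:
  assumes lam: "lam > 0" and f: "continuous_on UNIV f" and i: "i \<in> {1..N}"
  shows "restr (S i) (Rco S N M \<kappa> R phi p lam f) =
    (\<lambda>x. 1 * R i lam (restr (S i) f) x + 1 * (\<Sum>kl\<in>{kl\<in>I. fst kl = i}.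
        uvec S N M \<kappa> R phi p f lam kl * ell R phi (fst kl) (snd kl) lam x))"
    (is "_ = (\<lambda>x. 1 * ?Gi x + 1 * ?E x)")
proof
  fix x
  let ?U = "uvec S N M \<kappa> R phi p f lam"
  let ?F = "\<lambda>kl. ?U kl * ell R phi (fst kl) (snd kl) lam x"
  show "restr (S i) (Rco S N M \<kappa> R phi p lam f) x = 1 * ?Gi x + 1 * ?E x"
  proof (cases "x \<in> S i")
    case True
    have "(\<Sum>kl\<in>I. ?F kl) = (\<Sum>kl\<in>{kl\<in>I. fst kl = i}. ?F kl)"
    proof (rule sum.mono_neutral_right[OF finI])
      show "\<forall>kl\<in>I - {kl \<in> I. fst kl = i}. ?F kl = 0"
      proof
        fix kl assume kl: "kl \<in> I - {kl \<in> I. fst kl = i}"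
        obtain k l where kl': "kl = (k, l)" by fastforce
        have klI: "(k, l) \<in> I" and ki: "k \<noteq> i" using kl kl' by auto
        have "x \<notin> S k" using other[OF i _ True ki] I_mem[OF klI] by auto
        then have "ell R phi k l lam x = 0" by (rule Cfun_zero_out[OF ell_C[OF klI lam]])
        then show "?F kl = 0" using kl' by simp
      qed
    qed auto
    then show ?thesis
      using True Rdu_at[OF i True lam f] unfolding restr_def Rco_def by simp
  next
    case False
    have "?Gi x = 0" by (rule Cfun_zero_out[OF RC[OF i lam f] False])
    moreover have "?E x = 0"
    proof (intro sum.neutral ballI)
      fix kl assume kl: "kl \<in> {kl \<in> I. fst kl = i}"
      obtain k l where kl': "kl = (k, l)" by fastforce
      have klI: "(k, l) \<in> I" and ki: "k = i" using kl kl' by auto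
      have "ell R phi k l lam x = 0" using Cfun_zero_out[OF ell_C[OF klI lam]] False ki by simp
      then show "?F kl = 0" using kl' by simp
    qed
    ultimately show ?thesis using False unfolding restr_def by simp
  qed
qed

lemma per_i:
  assumes lam: "lam > 0" and mu: "mu > 0" and f: "continuous_on UNIV f" and i: "i \<in> {1..N}"
  shows "(lam - mu) * R i mu (restr (S i) (Rco S N M \<kappa> R phi p lam f)) x =
    R i mu (restr (S i) f) x - R i lam (restr (S i) f) x +
    (\<Sum>kl\<in>{kl\<in>I. fst kl = i}. uvec S N M \<kappa> R phi p f lam kl *
        (ell R phi (fst kl) (snd kl) mu x - ell R phi (fst kl) (snd kl) lam x))"
proof -
  let ?U = "uvec S N M \<kappa> R phi p f lam"
  let ?Ii = "{kl\<in>I. fst kl = i}"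
  let ?Gi = "R i lam (restr (S i) f)"
  let ?E = "\<lambda>x. \<Sum>kl\<in>?Ii. ?U kl * ell R phi (fst kl) (snd kl) lam x"
  have FiI: "feller_resolvent (S i) (R i)" by (rule Fi[OF i])
  have GiC: "?Gi \<in> Cfun (S i)" by (rule RC[OF i lam f])
  have ellIi: "\<forall>kl\<in>?Ii. ell R phi (fst kl) (snd kl) lam \<in> Cfun (S i)"
  proof
    fix kl assume kl: "kl \<in> ?Ii"
    obtain k l where kl': "kl = (k, l)" by fastforce
    show "ell R phi (fst kl) (snd kl) lam \<in> Cfun (S i)"
      using ell_C[of k l lam] kl kl' lam by auto
  qed
  have finIi: "finite ?Ii" using finI by simp
  have EC: "?E \<in> Cfun (S i)" by (rule Cfun_sum[OF ellIi])
  have "R i mu (restr (S i) (Rco S N M \<kappa> R phi p lam f)) = R i mu (\<lambda>x. 1 * ?Gi x + 1 * ?E x)"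
    using restr_G[OF lam f i] by simp
  also have "\<dots> = (\<lambda>x. 1 * R i mu ?Gi x + 1 * R i mu ?E x)"
    by (rule Flin[OF FiI mu GiC EC])
  also have "R i mu ?E = (\<lambda>x. \<Sum>kl\<in>?Ii. ?U kl * R i mu (ell R phi (fst kl) (snd kl) lam) x)"
    by (rule Fsum[OF FiI mu finIi ellIi])
  finally have e: "R i mu (restr (S i) (Rco S N M \<kappa> R phi p lam f)) x
      = R i mu ?Gi x + (\<Sum>kl\<in>?Ii. ?U kl * R i mu (ell R phi (fst kl) (snd kl) lam) x)" by simp
  have s: "(lam - mu) * (\<Sum>kl\<in>?Ii. ?U kl * R i mu (ell R phi (fst kl) (snd kl) lam) x)
     = (\<Sum>kl\<in>?Ii. ?U kl * (ell R phi (fst kl) (snd kl) mu x - ell R phi (fst kl) (snd kl) lam x))"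
    unfolding sum_distrib_left
  proof (intro sum.cong refl)
    fix kl assume kl: "kl \<in> ?Ii"
    obtain k l where kl': "kl = (k, l)" by fastforce
    have klI: "(k, l) \<in> I" and ki: "k = i" using kl kl' by auto
    have E: "(lam - mu) * R k mu (ell R phi k l lam) x = ell R phi k l mu x - ell R phi k l lam x"
      by (rule ellR[OF klI lam mu])
    have "(lam - mu) * (?U kl * R i mu (ell R phi (fst kl) (snd kl) lam) x)
       = ?U kl * ((lam - mu) * R k mu (ell R phi k l lam) x)"
      using kl' ki by simp
    also have "\<dots> = ?U kl * (ell R phi (fst kl) (snd kl) mu x - ell R phi (fst kl) (snd kl) lam x)"
      unfolding E using kl' by simp
    finally show "(lam - mu) * (?U kl * R i mu (ell R phi (fst kl) (snd kl) lam) x)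
       = ?U kl * (ell R phi (fst kl) (snd kl) mu x - ell R phi (fst kl) (snd kl) lam x)" .
  qed
  have g: "(lam - mu) * R i mu ?Gi x = R i mu (restr (S i) f) x - R i lam (restr (S i) f) x"
    by (rule RG[OF i lam mu Cfun_restr[OF f]])
  show ?thesis unfolding e distrib_left g s by simp
qed

lemma pointwise:
  assumes lam: "lam > 0" and mu: "mu > 0" and f: "continuous_on UNIV f"
  shows "(lam - mu) * Rdu S N R mu (Rco S N M \<kappa> R phi p lam f) x =
    Rdu S N R mu f x - Rdu S N R lam f x +
    (\<Sum>kl\<in>I. uvec S N M \<kappa> R phi p f lam kl *
        (ell R phi (fst kl) (snd kl) mu x - ell R phi (fst kl) (snd kl) lam x))"
proof -
  let ?F = "\<lambda>kl. uvec S N M \<kappa> R phi p f lam kl *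
        (ell R phi (fst kl) (snd kl) mu x - ell R phi (fst kl) (snd kl) lam x)"
  have "(lam - mu) * Rdu S N R mu (Rco S N M \<kappa> R phi p lam f) x
     = (\<Sum>i\<in>{1..N}. (lam - mu) * R i mu (restr (S i) (Rco S N M \<kappa> R phi p lam f)) x)"
    unfolding Rdu_def by (simp add: sum_distrib_left)
  also have "\<dots> = (\<Sum>i\<in>{1..N}. R i mu (restr (S i) f) x - R i lam (restr (S i) f) x +
      (\<Sum>kl\<in>{kl\<in>I. fst kl = i}. ?F kl))"
    by (intro sum.cong refl per_i[OF lam mu f]) auto
  also have "\<dots> = Rdu S N R mu f x - Rdu S N R lam f x + (\<Sum>i\<in>{1..N}. \<Sum>kl\<in>{kl\<in>I. fst kl = i}. ?F kl)"
    unfolding Rdu_def by (simp add: sum.distrib sum_subtractf)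
  also have "(\<Sum>i\<in>{1..N}. \<Sum>kl\<in>{kl\<in>I. fst kl = i}. ?F kl) = (\<Sum>kl\<in>I. ?F kl)"
    by (rule sum.group[OF finI]) (use I_mem in auto)
  finally show ?thesis .
qed

end

context setting begin

lemma vvec_Rco:
  assumes lam: "lam > 0" and mu: "mu > 0" and f: "continuous_on UNIV f" and ij: "ij \<in> I"
  shows "(lam - mu) * vvec S N M \<kappa> R p (Rco S N M \<kappa> R phi p lam f) mu ij =
    vvec S N M \<kappa> R p f mu ij - vvec S N M \<kappa> R p f lam ij +
    (\<Sum>kl\<in>I. uvec S N M \<kappa> R phi p f lam kl * (aa mu ij kl - aa lam ij kl))"
proof -
  let ?U = "uvec S N M \<kappa> R phi p f lam"
  let ?e = "\<lambda>t kl. ell R phi (fst kl) (snd kl) t"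
  let ?P = "p ij"
  have ec: "continuous_on UNIV (?e t kl)" if "kl \<in> I" "t > 0" for t kl
    using that ell_cont[of "fst kl" "snd kl" t] by auto
  have int_e: "integrable ?P (?e t kl)" if "kl \<in> I" "t > 0" for t kl
    by (rule integrable_cont[OF ij ec[OF that]])
  have int_d: "integrable ?P (\<lambda>x. ?U kl * (?e mu kl x - ?e lam kl x))" if "kl \<in> I" for kl
    using int_e[OF that mu] int_e[OF that lam] by auto
  have int_Rmu: "integrable ?P (Rdu S N R mu f)" by (rule integrable_cont[OF ij Rdu_cont[OF mu f]])
  have int_Rlam: "integrable ?P (Rdu S N R lam f)" by (rule integrable_cont[OF ij Rdu_cont[OF lam f]])
  have int_sum: "integrable ?P (\<lambda>x. \<Sum>kl\<in>I. ?U kl * (?e mu kl x - ?e lam kl x))"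
    using int_d by auto
  have "(lam - mu) * vvec S N M \<kappa> R p (Rco S N M \<kappa> R phi p lam f) mu ij
      = integral\<^sup>L ?P (\<lambda>x. (lam - mu) * Rdu S N R mu (Rco S N M \<kappa> R phi p lam f) x)"
    unfolding vvec_def by simp
  also have "\<dots> = integral\<^sup>L ?P (\<lambda>x. (Rdu S N R mu f x - Rdu S N R lam f x) +
      (\<Sum>kl\<in>I. ?U kl * (?e mu kl x - ?e lam kl x)))"
    using pointwise[OF lam mu f] by simp
  also have "\<dots> = integral\<^sup>L ?P (\<lambda>x. Rdu S N R mu f x - Rdu S N R lam f x) +
      integral\<^sup>L ?P (\<lambda>x. \<Sum>kl\<in>I. ?U kl * (?e mu kl x - ?e lam kl x))"
    by (rule Bochner_Integration.integral_add) (use int_Rmu int_Rlam int_sum in auto)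
  also have "integral\<^sup>L ?P (\<lambda>x. Rdu S N R mu f x - Rdu S N R lam f x)
      = vvec S N M \<kappa> R p f mu ij - vvec S N M \<kappa> R p f lam ij"
    unfolding vvec_def by (rule Bochner_Integration.integral_diff[OF int_Rmu int_Rlam])
  also have "integral\<^sup>L ?P (\<lambda>x. \<Sum>kl\<in>I. ?U kl * (?e mu kl x - ?e lam kl x))
      = (\<Sum>kl\<in>I. integral\<^sup>L ?P (\<lambda>x. ?U kl * (?e mu kl x - ?e lam kl x)))"
    by (rule Bochner_Integration.integral_sum) (rule int_d)
  also have "\<dots> = (\<Sum>kl\<in>I. ?U kl * (aa mu ij kl - aa lam ij kl))"
  proof (intro sum.cong refl)
    fix kl assume kl: "kl \<in> I"
    have "integral\<^sup>L ?P (\<lambda>x. ?U kl * (?e mu kl x - ?e lam kl x))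
        = ?U kl * integral\<^sup>L ?P (\<lambda>x. ?e mu kl x - ?e lam kl x)"
      by (rule integral_mult_right_zero)
    also have "integral\<^sup>L ?P (\<lambda>x. ?e mu kl x - ?e lam kl x) = integral\<^sup>L ?P (?e mu kl) - integral\<^sup>L ?P (?e lam kl)"
      by (rule Bochner_Integration.integral_diff[OF int_e[OF kl mu] int_e[OF kl lam]])
    finally show "integral\<^sup>L ?P (\<lambda>x. ?U kl * (?e mu kl x - ?e lam kl x)) = ?U kl * (aa mu ij kl - aa lam ij kl)"
      using aa_int[OF kl mu, of ij] aa_int[OF kl lam, of ij] by simp
  qed
  finally show ?thesis .
qed

lemma main:
  assumes lam: "lam > 0" and mu: "mu > 0" and f: "continuous_on UNIV f"
  shows "\<forall>ij\<in>I. (lam - mu) * uvec S N M \<kappa> R phi p (Rco S N M \<kappa> R phi p lam f) mu ij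
             = uvec S N M \<kappa> R phi p f mu ij - uvec S N M \<kappa> R phi p f lam ij"
proof (cases "lam = mu")
  case True then show ?thesis by simp
next
  case False
  let ?U = "uvec S N M \<kappa> R phi p f lam"
  let ?V = "uvec S N M \<kappa> R phi p f mu"
  let ?G = "Rco S N M \<kappa> R phi p lam f"
  define w where "w = restrict (\<lambda>ij. (?V ij - ?U ij) / (lam - mu)) I"
  have d: "lam - mu \<noteq> 0" using False by simp
  have U: "\<forall>ij\<in>I. ?U ij - (\<Sum>kl\<in>I. ?U kl * aa lam ij kl) = vvec S N M \<kappa> R p f lam ij"
    using uvec_prop[OF lam, of f] unfolding Nop_aa by blast
  have V: "\<forall>ij\<in>I. ?V ij - (\<Sum>kl\<in>I. ?V kl * aa mu ij kl) = vvec S N M \<kappa> R p f mu ij"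
    using uvec_prop[OF mu, of f] unfolding Nop_aa by blast
  have weq: "\<forall>ij\<in>I. w ij - Nop S M \<kappa> R phi p mu w ij = vvec S N M \<kappa> R p ?G mu ij"
  proof
    fix ij assume ij: "ij \<in> I"
    have "(\<Sum>kl\<in>I. w kl * aa mu ij kl) = (\<Sum>kl\<in>I. (?V kl - ?U kl) * aa mu ij kl) / (lam - mu)"
      unfolding w_def sum_divide_distrib by (intro sum.cong refl) auto
    also have "(\<Sum>kl\<in>I. (?V kl - ?U kl) * aa mu ij kl)
        = (\<Sum>kl\<in>I. ?V kl * aa mu ij kl) - (\<Sum>kl\<in>I. ?U kl * aa mu ij kl)"
      by (simp add: sum_subtractf left_diff_distrib)
    finally have Nw: "(\<Sum>kl\<in>I. w kl * aa mu ij kl)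
        = ((\<Sum>kl\<in>I. ?V kl * aa mu ij kl) - (\<Sum>kl\<in>I. ?U kl * aa mu ij kl)) / (lam - mu)" .
    have vG: "(lam - mu) * vvec S N M \<kappa> R p ?G mu ij =
      vvec S N M \<kappa> R p f mu ij - vvec S N M \<kappa> R p f lam ij +
      ((\<Sum>kl\<in>I. ?U kl * aa mu ij kl) - (\<Sum>kl\<in>I. ?U kl * aa lam ij kl))"
      using vvec_Rco[OF lam mu f ij] by (simp add: sum_subtractf right_diff_distrib)
    have "(lam - mu) * (w ij - (\<Sum>kl\<in>I. w kl * aa mu ij kl))
        = (?V ij - ?U ij) - ((\<Sum>kl\<in>I. ?V kl * aa mu ij kl) - (\<Sum>kl\<in>I. ?U kl * aa mu ij kl))"
    proof -
      have wij: "w ij = (?V ij - ?U ij) / (lam - mu)" using ij by (simp add: w_def)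
      have gen: "\<And>x y. (lam - mu) * (x / (lam - mu) - y / (lam - mu)) = x - y"
        using d by (simp add: right_diff_distrib)
      show ?thesis unfolding Nw wij by (rule gen)
    qed
    also have "\<dots> = (lam - mu) * vvec S N M \<kappa> R p ?G mu ij"
      unfolding vG using U[rule_format, OF ij] V[rule_format, OF ij] by linarith
    finally have "w ij - (\<Sum>kl\<in>I. w kl * aa mu ij kl) = vvec S N M \<kappa> R p ?G mu ij"
      using d by simp
    then show "w ij - Nop S M \<kappa> R phi p mu w ij = vvec S N M \<kappa> R p ?G mu ij"
      unfolding Nop_aa .
  qed
  have "uvec S N M \<kappa> R phi p ?G mu = w"
    by (rule uvec_eq[OF mu]) (use weq w_def in simp)
  then show ?thesis using d by (simp add: w_def)
qed

end

theorem lemma2: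
  fixes S :: "nat \<Rightarrow> 'a::metric_space set"
    and N M :: nat
    and R :: "nat \<Rightarrow> real \<Rightarrow> ('a \<Rightarrow> real) \<Rightarrow> 'a \<Rightarrow> real"
    and \<kappa> :: "nat \<Rightarrow> nat"
    and phi :: "nat \<Rightarrow> nat \<Rightarrow> 'a \<Rightarrow> real"
    and p :: "nat \<times> nat \<Rightarrow> 'a measure"
    and lam mu :: real
    and f :: "'a \<Rightarrow> real"
  assumes "1 \<le> M" and "M \<le> N"
    and "\<forall>i\<in>{1..N}. compact (S i) \<and> open (S i)"
    and "\<forall>i\<in>{1..N}. \<forall>j\<in>{1..N}. i \<noteq> j \<longrightarrow> S i \<inter> S j = {}"
    and "(\<Union>i\<in>{1..N}. S i) = UNIV"
    and "\<forall>i\<in>{1..N}. feller_resolvent (S i) (R i)"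
    and "\<forall>i\<in>{1..M}. \<not> conservative (S i) (R i)"
    and "\<forall>i\<in>{M+1..N}. conservative (S i) (R i)"
    and "\<forall>i\<in>{1..M}. trivial_kernel (S i) (R i)"
    and "\<forall>(i, j)\<in>IJ M \<kappa>. phi i j \<in> Cfun (S i) \<and> (\<forall>x. 0 \<le> phi i j x \<and> phi i j x \<le> indicator (S i) x)"
    and "\<forall>(i, j)\<in>IJ M \<kappa>. \<forall>t>0. \<forall>x. t * R i t (phi i j) x \<le> phi i j x"
    and "\<forall>(i, j)\<in>IJ M \<kappa>. \<forall>t>0. (\<lambda>x. t * R i t (phi i j) x) \<noteq> phi i j"
    and "\<forall>i\<in>{1..M}. \<forall>x. (\<Sum>j\<in>{1..\<kappa> i}. phi i j x) = indicator (S i) x"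
    and "\<forall>ij\<in>IJ M \<kappa>. subprob_space (p ij) \<and> sets (p ij) = sets borel"
    and "lam > 0" and "mu > 0"
    and "continuous_on UNIV f"
  shows "\<forall>ij\<in>IJ M \<kappa>.
           (lam - mu) * uvec S N M \<kappa> R phi p (Rco S N M \<kappa> R phi p lam f) mu ij
             = uvec S N M \<kappa> R phi p f mu ij - uvec S N M \<kappa> R phi p f lam ij"
proof -
  interpret setting S N M R \<kappa> phi p
    by unfold_locales (fact assms)+
  show ?thesis by (rule main[OF assms(15,16,17)])
qed

end
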